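(* Assume $\kappa=\kappa^{<\kappa}$. For every point $x$ of $S_\kappa$, the subspace $S_\kappa\setminus\{x\}$ is not $C^*$-embedded in $S_\kappa$, i.e. there is a bounded continuous real-valued function on $S_\kappa\setminus\{x\}$ that has no continuous extension to $S_\kappa$.
   Context: A space is zero-dimensional if it has a base of clopen sets. For a zero-dimensional space $X$ and an open $U\subseteq X$, the ($X$-)type $\tau(U)$ is the least cardinal $\tau$ such that $U$ is a union of $\tau$ many clopen subsets of $X$. A zero-dimensional space is an $F_\kappa$-space if every open subset of type less than $\kappa$ is $C^*$-embedded (every bounded continuous real-valued function on it extends continuously to the whole space). A space is a $G_\kappa$-space if every non-empty intersection of fewer than $\kappa$ open sets has non-empty interior. A $\kappa$-Parovičenko space is a compact Hausdorff zero-dimensional $F_\kappa$- and $G_\kappa$-space without isolated points (no weight restriction is imposed). If $\kappa=\kappa^{<\kappa}$ there is, up to homeomorphism, a unique $\kappa$-Parovičenko space of weight $\kappa$; it is denoted $S_\kappa$. *)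

theory Defs
  imports "HOL-Analysis.Analysis"
begin

unbundle cardinal_syntax

text \<open>Cardinals are represented by sets: the cardinal kappa is the cardinality
  of a carrier set K; comparisons use the library's ordLeq / ordLess on card_of.\<close>

text \<open>kappa = kappa^(<kappa): for every cardinal lambda < kappa (represented by
  a subset of K of smaller cardinality), kappa^lambda <= kappa.\<close>
definition kappa_eq_kappa_lt_kappa :: "'k set \<Rightarrow> bool" where
  "kappa_eq_kappa_lt_kappa K \<longleftrightarrow>
     (\<forall>A. A \<subseteq> K \<and> (card_of A) <o (card_of K) \<longrightarrow> (card_of (Func A K)) \<le>o (card_of K))"

definition clopenin :: "'a topology \<Rightarrow> 'a set \<Rightarrow> bool" where
  "clopenin X C \<longleftrightarrow> closedin X C \<and> openin X C"

definition zero_dim :: "'a topology \<Rightarrow> bool" where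
  "zero_dim X \<longleftrightarrow>
     (\<forall>U x. openin X U \<and> x \<in> U \<longrightarrow> (\<exists>C. clopenin X C \<and> x \<in> C \<and> C \<subseteq> U))"

definition Cstar_embedded :: "'a topology \<Rightarrow> 'a set \<Rightarrow> bool" where
  "Cstar_embedded X S \<longleftrightarrow>
     (\<forall>f. continuous_map (subtopology X S) euclideanreal f \<and> bounded (f ` S) \<longrightarrow>
        (\<exists>g. continuous_map X euclideanreal g \<and> (\<forall>x\<in>S. g x = f x)))"

definition type_less :: "'a topology \<Rightarrow> 'a set \<Rightarrow> 'k set \<Rightarrow> bool" where
  "type_less X U K \<longleftrightarrow>
     (\<exists>\<C>. (\<forall>C\<in>\<C>. clopenin X C) \<and> \<Union>\<C> = U \<and> (card_of \<C>) <o (card_of K))"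

definition F_kappa_space :: "'a topology \<Rightarrow> 'k set \<Rightarrow> bool" where
  "F_kappa_space X K \<longleftrightarrow> zero_dim X \<and>
     (\<forall>U. openin X U \<and> type_less X U K \<longrightarrow> Cstar_embedded X U)"

definition G_kappa_space :: "'a topology \<Rightarrow> 'k set \<Rightarrow> bool" where
  "G_kappa_space X K \<longleftrightarrow>
     (\<forall>\<U>. (\<forall>U\<in>\<U>. openin X U) \<and> (card_of \<U>) <o (card_of K) \<and> topspace X \<inter> \<Inter>\<U> \<noteq> {} \<longrightarrow>
        X interior_of (topspace X \<inter> \<Inter>\<U>) \<noteq> {})"

definition kappa_Parovicenko :: "'a topology \<Rightarrow> 'k set \<Rightarrow> bool" where
  "kappa_Parovicenko X K \<longleftrightarrow>
     compact_space X \<and> Hausdorff_space X \<and> zero_dim X \<and>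
     F_kappa_space X K \<and> G_kappa_space X K \<and>
     (\<forall>x\<in>topspace X. \<not> openin X {x})"

definition is_base_of :: "'a topology \<Rightarrow> 'a set set \<Rightarrow> bool" where
  "is_base_of X \<B> \<longleftrightarrow> (\<forall>B\<in>\<B>. openin X B) \<and>
     (\<forall>U. openin X U \<longrightarrow> (\<exists>\<V>. \<V> \<subseteq> \<B> \<and> \<Union>\<V> = U))"

definition has_weight :: "'a topology \<Rightarrow> 'k set \<Rightarrow> bool" where
  "has_weight X K \<longleftrightarrow> (\<exists>\<B>. is_base_of X \<B> \<and> (card_of \<B>) =o (card_of K)) \<and>
     (\<forall>\<B>. is_base_of X \<B> \<longrightarrow> (card_of K) \<le>o (card_of \<B>))"

end

theory Submission
  imports Defs
begin
unbundle cardinal_syntax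

lemma insert_ordLess:
  assumes "infinite K" "|A| <o |K|"
  shows "|insert z A| <o |K|"
proof -
  have "|{z}| <o |K|"
    by (meson assms(1) card_of_Well_order card_of_ordLeq_finite finite.emptyI finite.insertI not_ordLeq_iff_ordLess)
  then have "|{z} \<union> A| <o |K|" using card_of_Un_ordLess_infinite assms by blast
  then show ?thesis by simp
qed

lemma clopen_diff: "clopenin X A \<Longrightarrow> clopenin X B \<Longrightarrow> clopenin X (A - B)"
  unfolding clopenin_def by (auto intro: closedin_diff openin_diff)

lemma clopen_Un: "clopenin X A \<Longrightarrow> clopenin X B \<Longrightarrow> clopenin X (A \<union> B)"
  unfolding clopenin_def by auto

lemma clopen_topspace: "clopenin X (topspace X)"
  unfolding clopenin_def by auto

lemma openin_sub_sub: "openin X U \<Longrightarrow> U \<subseteq> S \<Longrightarrow> openin (subtopology X S) U"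
  unfolding openin_subtopology by (intro exI[of _ U]) auto


definition good :: "'a topology \<Rightarrow> 'a \<Rightarrow> 'j set \<Rightarrow> ('j \<Rightarrow> 'a set) \<Rightarrow> ('j \<Rightarrow> 'a \<Rightarrow> real) \<Rightarrow> 'a set \<Rightarrow> 'a set \<Rightarrow> 'a set \<Rightarrow> ('a \<Rightarrow> real) \<Rightarrow> bool" where
 "good X x J C g Ba P Q h \<longleftrightarrow>
  clopenin X P \<and> clopenin X Q \<and> P \<noteq> {} \<and> Q \<noteq> {} \<and> P \<inter> Q = {} \<and> P \<subseteq> Ba \<and> Q \<subseteq> Ba \<and> x \<notin> P \<and> x \<notin> Q
  \<and> (\<forall>j\<in>J. P \<subseteq> C j \<and> Q \<subseteq> C j)
  \<and> continuous_map X euclideanreal h \<and> (\<forall>y. h y \<in> {0..1}) \<and> (\<forall>y\<in>P. h y = 0) \<and> (\<forall>y\<in>Q. h y = 1)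
  \<and> (\<forall>j\<in>J. \<forall>y\<in>topspace X. y \<notin> C j \<longrightarrow> h y = g j y)"

lemma step:
  fixes X :: "'a topology" and K :: "'k set" and J :: "'j set"
  assumes infK: "infinite K"
    and zd: "zero_dim X" and Hs: "Hausdorff_space X" and noiso: "\<forall>y\<in>topspace X. \<not> openin X {y}"
    and F: "F_kappa_space X K" and G: "G_kappa_space X K"
    and x: "x \<in> topspace X"
    and J: "|J| <o |K|"
    and Ba: "clopenin X Ba" "x \<in> Ba"
    and Cc: "\<And>j. j \<in> J \<Longrightarrow> clopenin X (C j) \<and> x \<in> C j"
    and gc: "\<And>j. j \<in> J \<Longrightarrow> continuous_map X euclideanreal (g j) \<and> (\<forall>y. g j y \<in> {0..1})"
    and compat: "\<And>i j y. i \<in> J \<Longrightarrow> j \<in> J \<Longrightarrow> y \<in> topspace X \<Longrightarrow> y \<notin> C i \<Longrightarrow> y \<notin> C j \<Longrightarrow> g i y = g j y"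
  shows "\<exists>P Q h. good X x J C g Ba P Q h"
proof -
  define W where "W = (\<Union>j\<in>J. topspace X - C j)"
  have opT: "openin X (topspace X - C j)" if "j \<in> J" for j
    using Cc[OF that] unfolding clopenin_def by blast
  have W: "openin X W" unfolding W_def using opT by blast
  have cov: "topspace (subtopology X W) \<subseteq> (\<Union>j\<in>J. topspace X - C j)" by (auto simp: W_def)
  have op2: "openin (subtopology X W) (topspace X - C j)" if "j \<in> J" for j
    by (rule openin_sub_sub[OF opT[OF that]]) (use that in \<open>auto simp: W_def\<close>)
  have cont2: "continuous_map (subtopology (subtopology X W) (topspace X - C j)) euclideanreal (g j)" if "j \<in> J" for j
    using gc[OF that] continuous_map_from_subtopology by blast
  have agr2: "g i y = g j y" if "i \<in> J" "j \<in> J" "y \<in> topspace (subtopology X W) \<inter> (topspace X - C i) \<inter> (topspace X - C j)" for i j y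
    using compat[OF that(1,2)] that(3) by auto
  obtain f where fc: "continuous_map (subtopology X W) euclideanreal f"
    and feq: "\<And>y j. j \<in> J \<Longrightarrow> y \<in> topspace (subtopology X W) \<inter> (topspace X - C j) \<Longrightarrow> f y = g j y"
    using pasting_lemma_exists[OF cov op2 cont2 agr2] by blast
  have fW: "f ` W \<subseteq> {0..1}"
  proof
    fix v assume "v \<in> f ` W"
    then obtain y where y: "y \<in> W" "v = f y" by blast
    then obtain j where j: "j \<in> J" "y \<in> topspace X - C j" unfolding W_def by blast
    then have "f y = g j y" using feq[OF j(1)] y by auto
    then show "v \<in> {0..1}" using gc[OF j(1)] y by auto
  qed
  have fb: "bounded (f ` W)"
    using bounded_subset[OF compact_imp_bounded[OF compact_Icc] fW] by blast
  have tl: "type_less X W K"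
    unfolding type_less_def
  proof (intro exI conjI)
    show "\<forall>C\<in>(\<lambda>j. topspace X - C j) ` J. clopenin X C"
      using Cc clopen_diff clopen_topspace by blast
    show "\<Union> ((\<lambda>j. topspace X - C j) ` J) = W" unfolding W_def by blast
    show "|(\<lambda>j. topspace X - C j) ` J| <o |K|"
      using card_of_image[of "\<lambda>j. topspace X - C j" J] J by (rule ordLeq_ordLess_trans)
  qed
  have "Cstar_embedded X W" using F W tl unfolding F_kappa_space_def by blast
  then obtain e where ec: "continuous_map X euclideanreal e" and eeq: "\<And>y. y \<in> W \<Longrightarrow> e y = f y"
    using fc fb unfolding Cstar_embedded_def by blast
  define U where "U = insert Ba (C ` J)"
  have Uo: "\<forall>V\<in>U. openin X V" using Ba Cc unfolding U_def clopenin_def by blast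
  have "|C ` J| <o |K|" using card_of_image[of C J] J by (rule ordLeq_ordLess_trans)
  then have Uc: "|U| <o |K|" unfolding U_def by (rule insert_ordLess[OF infK])
  have xU: "x \<in> topspace X \<inter> \<Inter>U" using x Ba Cc unfolding U_def by blast
  define Oi where "Oi = X interior_of (topspace X \<inter> \<Inter>U)"
  have xU': "topspace X \<inter> \<Inter>U \<noteq> {}" using xU by blast
  have One: "Oi \<noteq> {}" using G Uo Uc xU' unfolding G_kappa_space_def Oi_def by blast
  have Oo: "openin X Oi" unfolding Oi_def by simp
  have Osub: "Oi \<subseteq> topspace X \<inter> \<Inter>U" unfolding Oi_def by (rule interior_of_subset)
  have t1: "t1_space X" using Hs Hausdorff_imp_t1_space by blast
  define Oj where "Oj = Oi - {x}"
  have Ojo: "openin X Oj" unfolding Oj_def using Oo closedin_t1_singleton[OF t1 x] by blast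
  obtain y where y: "y \<in> Oj"
  proof -
    obtain u where u: "u \<in> Oi" using One by blast
    show ?thesis
    proof (cases "u = x")
      case True
      then have "Oi \<noteq> {x}" using Oo noiso x by blast
      then obtain v where "v \<in> Oi" "v \<noteq> x" using u True by blast
      then show ?thesis using that Oj_def by blast
    next
      case False then show ?thesis using that Oj_def u by blast
    qed
  qed
  have ytop: "y \<in> topspace X" using y Osub Oj_def by blast
  have "Oj \<noteq> {y}" using Ojo noiso ytop by blast
  then obtain z where z: "z \<in> Oj" "z \<noteq> y" using y by blast
  have ztop: "z \<in> topspace X" using z Osub Oj_def by blast
  obtain U1 V1 where UV: "openin X U1" "openin X V1" "y \<in> U1" "z \<in> V1" "disjnt U1 V1"
    using Hs ytop ztop z(2) unfolding Hausdorff_space_def by blast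
  have o1: "openin X (U1 \<inter> Oj)" using UV(1) Ojo by (rule openin_Int)
  have o2: "openin X (V1 \<inter> Oj)" using UV(2) Ojo by (rule openin_Int)
  have y1: "y \<in> U1 \<inter> Oj" using UV y by blast
  have z1: "z \<in> V1 \<inter> Oj" using UV z by blast
  obtain P where P: "clopenin X P" "y \<in> P" "P \<subseteq> U1 \<inter> Oj"
    using zd o1 y1 unfolding zero_dim_def by blast
  obtain Q where Q: "clopenin X Q" "z \<in> Q" "Q \<subseteq> V1 \<inter> Oj"
    using zd o2 z1 unfolding zero_dim_def by blast
  have PQ: "P \<inter> Q = {}" using P Q UV(5) unfolding disjnt_def by blast
  define h where "h = (\<lambda>y. if y \<in> P then 0 else if y \<in> Q then 1 else max 0 (min 1 (e y)))"
  define TT where "TT = (\<lambda>i::nat. if i=0 then P else if i=1 then Q else topspace X - (P \<union> Q))"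
  define ff where "ff = (\<lambda>i::nat. if i=0 then (\<lambda>_. 0) else if i=1 then (\<lambda>_. 1) else (\<lambda>y. max 0 (min 1 (e y))))"
  have hc: "continuous_map X euclideanreal h"
  proof (rule pasting_lemma[where I="{0,1,2::nat}" and T=TT and f=ff])
    show "openin X (TT i)" if "i \<in> {0,1,2::nat}" for i
      using P(1) Q(1) unfolding clopenin_def TT_def by (auto intro: openin_diff)
    show "continuous_map (subtopology X (TT i)) euclideanreal (ff i)" if "i \<in> {0,1,2::nat}" for i
      using ec unfolding ff_def by (auto intro!: continuous_intros continuous_map_from_subtopology)
    show "ff i v = ff j v"
      if "i \<in> {0,1,2::nat}" "j \<in> {0,1,2::nat}" "v \<in> topspace X \<inter> TT i \<inter> TT j" for i j v
      using that PQ unfolding TT_def ff_def by (auto split: if_splits)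
    show "\<exists>j. j \<in> {0,1,2::nat} \<and> v \<in> TT j \<and> h v = ff j v"
      if "v \<in> topspace X" for v
    proof (cases "v \<in> P")
      case True then show ?thesis unfolding h_def TT_def ff_def by (intro exI[of _ 0]) auto
    next
      case False
      show ?thesis
      proof (cases "v \<in> Q")
        case True then show ?thesis using False unfolding h_def TT_def ff_def by (intro exI[of _ 1]) auto
      next
        case F2: False then show ?thesis using False that unfolding h_def TT_def ff_def by (intro exI[of _ 2]) auto
      qed
    qed
  qed
  have "good X x J C g Ba P Q h"
    unfolding good_def
  proof (intro conjI ballI allI impI)
    show "clopenin X P" "clopenin X Q" by (fact P(1)) (fact Q(1))
    show "P \<noteq> {}" "Q \<noteq> {}" using P Q by auto
    show "P \<inter> Q = {}" by (fact PQ)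
    show "P \<subseteq> Ba" "Q \<subseteq> Ba" using P Q Osub unfolding Oj_def U_def by auto
    show "x \<notin> P" "x \<notin> Q" using P Q unfolding Oj_def by auto
    show "P \<subseteq> C j" "Q \<subseteq> C j" if "j \<in> J" for j using P Q Osub that unfolding Oj_def U_def by auto
    show "continuous_map X euclideanreal h" by (fact hc)
    show "h v \<in> {0..1}" for v unfolding h_def by auto
    show "h v = 0" if "v \<in> P" for v using that unfolding h_def by auto
    show "h v = 1" if "v \<in> Q" for v using that PQ unfolding h_def by auto
    show "h v = g j v" if "j \<in> J" "v \<in> topspace X" "v \<notin> C j" for j v
    proof -
      have nP: "v \<notin> P" "v \<notin> Q" using P Q Osub that unfolding Oj_def U_def by auto
      have vW: "v \<in> W" using that unfolding W_def by blast
      have fv: "f v = g j v" using feq[OF that(1)] that vW by auto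
      have "f v \<in> {0..1}" using fW vW by blast
      then show ?thesis using nP eeq[OF vW] fv unfolding h_def by auto
    qed
  qed
  then show ?thesis by blast
qed


lemma main:
  fixes X :: "'a topology" and K :: "'k set" and x :: 'a and B :: "'k \<Rightarrow> 'a set"
  assumes infK: "infinite K"
    and zd: "zero_dim X" and Hs: "Hausdorff_space X" and noiso: "\<forall>y\<in>topspace X. \<not> openin X {y}"
    and F: "F_kappa_space X K" and G: "G_kappa_space X K"
    and x: "x \<in> topspace X"
    and Bc: "\<And>a. a \<in> K \<Longrightarrow> clopenin X (B a) \<and> x \<in> B a"
    and Bbase: "\<And>U. openin X U \<Longrightarrow> x \<in> U \<Longrightarrow> \<exists>a\<in>K. B a \<subseteq> U"
  shows "\<not> Cstar_embedded X (topspace X - {x})"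
proof
  assume CS: "Cstar_embedded X (topspace X - {x})"
  define r where "r = |K|"
  have Fr: "Field r = K" unfolding r_def by (rule Field_card_of)
  have wo: "wo_rel r" unfolding wo_rel_def r_def using card_of_well_order_on[of K] Field_card_of[of K] by simp
  define CC :: "('a set \<times> 'a set \<times> ('a \<Rightarrow> real)) \<Rightarrow> 'k \<Rightarrow> 'a set" where
    "CC t b = B b - (fst t \<union> fst (snd t))" for t b
  define H :: "('k \<Rightarrow> ('a set \<times> 'a set \<times> ('a \<Rightarrow> real))) \<Rightarrow> 'k \<Rightarrow> ('a set \<times> 'a set \<times> ('a \<Rightarrow> real))" where
    "H T a = (SOME t. good X x (underS r a) (\<lambda>b. CC (T b) b) (\<lambda>b. snd (snd (T b))) (B a) (fst t) (fst (snd t)) (snd (snd t)))" for T a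
  have good_cong: "good X x J C1 g1 Ba P1 Q1 h1 = good X x J C2 g2 Ba P1 Q1 h1"
    if "\<forall>j\<in>J. C1 j = C2 j \<and> g1 j = g2 j" for J C1 C2 g1 g2 Ba P1 Q1 h1
    using that unfolding good_def by auto
  have adm: "wo_rel.adm_wo r H"
    unfolding wo_rel.adm_wo_def[OF wo]
  proof (intro allI impI)
    fix f g :: "'k \<Rightarrow> ('a set \<times> 'a set \<times> ('a \<Rightarrow> real))" and a
    assume "\<forall>y\<in>underS r a. f y = g y"
    then have "\<forall>j\<in>underS r a. CC (f j) j = CC (g j) j \<and> snd (snd (f j)) = snd (snd (g j))" by simp
    note gc = good_cong[OF this]
    show "H f a = H g a" unfolding H_def by (simp only: gc)
  qed
  define T where "T = wo_rel.worec r H"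
  have Tfix: "T a = H T a" for a unfolding T_def using wo_rel.worec_fixpoint[OF wo adm] by metis
  define C where "C b = CC (T b) b" for b
  define P where "P b = fst (T b)" for b
  define Q where "Q b = fst (snd (T b))" for b
  define h where "h b = snd (snd (T b))" for b
  have Ceq: "C b = B b - (P b \<union> Q b)" for b unfolding C_def CC_def P_def Q_def by simp
  have inv: "\<forall>a. a \<in> K \<longrightarrow> good X x (underS r a) C h (B a) (P a) (Q a) (h a)"
  proof
    fix a0
    show "a0 \<in> K \<longrightarrow> good X x (underS r a0) C h (B a0) (P a0) (Q a0) (h a0)"
    proof (rule wo_rel.well_order_induct[OF wo, of "\<lambda>a. a \<in> K \<longrightarrow> good X x (underS r a) C h (B a) (P a) (Q a) (h a)"])
      fix a
      assume IH: "\<forall>y. y \<noteq> a \<and> (y, a) \<in> r \<longrightarrow> (y \<in> K \<longrightarrow> good X x (underS r y) C h (B y) (P y) (Q y) (h y))"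
      show "a \<in> K \<longrightarrow> good X x (underS r a) C h (B a) (P a) (Q a) (h a)"
      proof
        assume aK: "a \<in> K"
        have JK: "b \<in> K" if "b \<in> underS r a" for b
          using that Fr unfolding underS_def Field_def by blast
        have IHJ: "good X x (underS r b) C h (B b) (P b) (Q b) (h b)" if "b \<in> underS r a" for b
          using IH JK[OF that] that unfolding underS_def by blast
        have J: "|underS r a| <o |K|"
          using card_of_underS[OF card_of_Card_order, of a K] aK Field_card_of[of K] unfolding r_def by simp
        have Cc: "clopenin X (C j) \<and> x \<in> C j" if "j \<in> underS r a" for j
        proof -
          have "clopenin X (P j)" "clopenin X (Q j)" "x \<notin> P j" "x \<notin> Q j"
            using IHJ[OF that] unfolding good_def by auto
          moreover have "clopenin X (B j)" "x \<in> B j" using Bc[OF JK[OF that]] by auto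
          ultimately show ?thesis unfolding Ceq using clopen_diff clopen_Un by blast
        qed
        have gc: "continuous_map X euclideanreal (h j) \<and> (\<forall>y. h j y \<in> {0..1})" if "j \<in> underS r a" for j
          using IHJ[OF that] unfolding good_def by auto
        have compat: "h i y = h j y" if "i \<in> underS r a" "j \<in> underS r a" "y \<in> topspace X" "y \<notin> C i" "y \<notin> C j" for i j y
        proof (cases "i = j")
          case True then show ?thesis by simp
        next
          case False
          have "i \<in> Field r" "j \<in> Field r" using JK that Fr by auto
          then have "(i,j) \<in> r \<or> (j,i) \<in> r" using wo_rel.TOTALS[OF wo] by blast
          then show ?thesis
          proof
            assume "(i,j) \<in> r"
            then have "i \<in> underS r j" using False unfolding underS_def by blast
            then show ?thesis using IHJ[OF that(2)] that unfolding good_def by auto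
          next
            assume "(j,i) \<in> r"
            then have "j \<in> underS r i" using False unfolding underS_def by blast
            then show ?thesis using IHJ[OF that(1)] that unfolding good_def by auto
          qed
        qed
        have ex: "\<exists>P Q g. good X x (underS r a) C h (B a) P Q g"
          using step[OF infK zd Hs noiso F G x J, of "B a" C h] Bc[OF aK] Cc gc compat by blast
        have Ta: "T a = (SOME t. good X x (underS r a) C h (B a) (fst t) (fst (snd t)) (snd (snd t)))"
          using Tfix[of a] unfolding H_def C_def[abs_def] h_def[abs_def] by simp
        have "\<exists>t. good X x (underS r a) C h (B a) (fst t) (fst (snd t)) (snd (snd t))"
          using ex by auto
        then have "good X x (underS r a) C h (B a) (fst (T a)) (fst (snd (T a))) (snd (snd (T a)))"
          unfolding Ta by (rule someI_ex)
        then show "good X x (underS r a) C h (B a) (P a) (Q a) (h a)"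
          unfolding P_def Q_def h_def by simp
      qed
    qed
  qed
  have goodK: "good X x (underS r a) C h (B a) (P a) (Q a) (h a)" if "a \<in> K" for a
    using inv that by blast
  have xC: "x \<in> C a" if "a \<in> K" for a
    using goodK[OF that] Bc[OF that] unfolding good_def Ceq by auto
  have compatK: "h i y = h j y" if "i \<in> K" "j \<in> K" "y \<in> topspace X" "y \<notin> C i" "y \<notin> C j" for i j y
  proof (cases "i = j")
    case True then show ?thesis by simp
  next
    case False
    have "i \<in> Field r" "j \<in> Field r" using that Fr by auto
    then have "(i,j) \<in> r \<or> (j,i) \<in> r" using wo_rel.TOTALS[OF wo] by blast
    then show ?thesis
    proof
      assume "(i,j) \<in> r"
      then have "i \<in> underS r j" using False unfolding underS_def by blast
      then show ?thesis using goodK[OF that(2)] that unfolding good_def by auto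
    next
      assume "(j,i) \<in> r"
      then have "j \<in> underS r i" using False unfolding underS_def by blast
      then show ?thesis using goodK[OF that(1)] that unfolding good_def by auto
    qed
  qed
  define S where "S = topspace X - {x}"
  have t1: "t1_space X" using Hs Hausdorff_imp_t1_space by blast
  have cov: "topspace (subtopology X S) \<subseteq> (\<Union>j\<in>K. topspace X - C j)"
  proof
    fix y assume "y \<in> topspace (subtopology X S)"
    then have y: "y \<in> topspace X" "y \<noteq> x" unfolding S_def by auto
    have "openin X (topspace X - {y})" using closedin_t1_singleton[OF t1 y(1)] by blast
    then obtain a where "a \<in> K" "B a \<subseteq> topspace X - {y}" using Bbase x y by blast
    then show "y \<in> (\<Union>j\<in>K. topspace X - C j)" using y unfolding Ceq by blast
  qed
  have op2: "openin (subtopology X S) (topspace X - C j)" if "j \<in> K" for j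
  proof (rule openin_sub_sub)
    have "clopenin X (C j)" using goodK[OF that] Bc[OF that] unfolding good_def Ceq
      using clopen_diff clopen_Un by blast
    then show "openin X (topspace X - C j)" unfolding clopenin_def by blast
    show "topspace X - C j \<subseteq> S" using xC[OF that] unfolding S_def by blast
  qed
  have cont2: "continuous_map (subtopology (subtopology X S) (topspace X - C j)) euclideanreal (h j)" if "j \<in> K" for j
  proof -
    have "continuous_map X euclideanreal (h j)" using goodK[OF that] unfolding good_def by blast
    then show ?thesis by (intro continuous_map_from_subtopology)
  qed
  have agr2: "h i y = h j y" if "i \<in> K" "j \<in> K" "y \<in> topspace (subtopology X S) \<inter> (topspace X - C i) \<inter> (topspace X - C j)" for i j y
    using compatK[OF that(1,2)] that(3) by auto
  obtain f where fc: "continuous_map (subtopology X S) euclideanreal f"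
    and feq: "\<And>y j. j \<in> K \<Longrightarrow> y \<in> topspace (subtopology X S) \<inter> (topspace X - C j) \<Longrightarrow> f y = h j y"
    using pasting_lemma_exists[OF cov op2 cont2 agr2] by blast
  have fS: "f ` S \<subseteq> {0..1}"
  proof
    fix v assume "v \<in> f ` S"
    then obtain y where y: "y \<in> S" "v = f y" by blast
    then have "y \<in> topspace (subtopology X S)" unfolding S_def by auto
    then obtain j where j: "j \<in> K" "y \<in> topspace X - C j" using cov by blast
    then have "f y = h j y" using feq[OF j(1)] y unfolding S_def by auto
    then show "v \<in> {0..1}" using goodK[OF j(1)] y unfolding good_def by auto
  qed
  have fb: "bounded (f ` S)"
    using bounded_subset[OF compact_imp_bounded[OF compact_Icc] fS] by blast
  obtain g where gc: "continuous_map X euclideanreal g" and geq: "\<And>y. y \<in> S \<Longrightarrow> g y = f y"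
    using CS fc fb unfolding Cstar_embedded_def S_def by blast
  define V where "V = {y \<in> topspace X. g y \<in> ball (g x) (1/2)}"
  have Vo: "openin X V" unfolding V_def
    by (rule openin_continuous_map_preimage[OF gc]) (simp add: open_openin[symmetric])
  have xV: "x \<in> V" unfolding V_def using x by simp
  obtain a where aK: "a \<in> K" and BV: "B a \<subseteq> V" using Bbase[OF Vo xV] by blast
  have ga: "good X x (underS r a) C h (B a) (P a) (Q a) (h a)" by (rule goodK[OF aK])
  have val: "\<bar>g x - c\<bar> < 1/2" if RR: "R \<subseteq> B a" "R \<noteq> {}" "x \<notin> R" "\<forall>y\<in>R. h a y = c" "R \<inter> C a = {}" for R c
  proof -
    obtain p where p: "p \<in> R" using RR(2) by blast
    have pV: "p \<in> V" using p RR(1) BV by blast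
    then have pX: "p \<in> topspace X" unfolding V_def by blast
    have pS: "p \<in> S" using pX p RR(3) unfolding S_def by blast
    have "f p = h a p" using feq[OF aK] pS pX p RR(5) unfolding S_def by auto
    then have "g p = c" using geq[OF pS] RR(4) p by simp
    then show ?thesis using pV unfolding V_def by (simp add: dist_real_def abs_minus_commute)
  qed
  have v0: "\<bar>g x - 0\<bar> < 1/2"
    by (rule val[of "P a"]) (use ga in \<open>auto simp: good_def Ceq\<close>)
  have v1: "\<bar>g x - 1\<bar> < 1/2"
    by (rule val[of "Q a"]) (use ga in \<open>auto simp: good_def Ceq\<close>)
  show False using v0 v1 by linarith
qed


theorem corollary4p2:
  fixes X :: "'a topology" and K :: "'k set" and x :: 'a
  assumes "infinite K"
    and "kappa_eq_kappa_lt_kappa K"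
    and "kappa_Parovicenko X K"
    and "has_weight X K"
    and "x \<in> topspace X"
  shows "\<not> Cstar_embedded X (topspace X - {x})"
proof -
  have zd: "zero_dim X" and Hs: "Hausdorff_space X" and F: "F_kappa_space X K"
    and G: "G_kappa_space X K" and noiso: "\<forall>y\<in>topspace X. \<not> openin X {y}"
    using assms(3) unfolding kappa_Parovicenko_def by auto
  obtain BB where base: "is_base_of X BB" and card: "|BB| =o |K|"
    using assms(4) unfolding has_weight_def by blast
  obtain h0 where bij: "bij_betw h0 K BB"
    using card_of_ordIso ordIso_symmetric[OF card] by blast
  define B where "B a = (if x \<in> h0 a then (SOME C. clopenin X C \<and> x \<in> C \<and> C \<subseteq> h0 a) else topspace X)" for a
  have Bc: "clopenin X (B a) \<and> x \<in> B a" if aK: "a \<in> K" for a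
  proof (cases "x \<in> h0 a")
    case True
    have "h0 a \<in> BB" using bij aK unfolding bij_betw_def by blast
    then have "openin X (h0 a)" using base unfolding is_base_of_def by blast
    then have "\<exists>C. clopenin X C \<and> x \<in> C \<and> C \<subseteq> h0 a" using zd True unfolding zero_dim_def by blast
    from someI_ex[OF this] show ?thesis using True unfolding B_def by simp
  next
    case False then show ?thesis using assms(5) clopen_topspace unfolding B_def by simp
  qed
  have Bbase: "\<exists>a\<in>K. B a \<subseteq> U" if UU: "openin X U" "x \<in> U" for U
  proof -
    obtain VV where "VV \<subseteq> BB" "\<Union>VV = U" using base UU(1) unfolding is_base_of_def by blast
    then obtain V where V: "V \<in> BB" "x \<in> V" "V \<subseteq> U" using UU(2) by blast
    then obtain a where a: "a \<in> K" "h0 a = V" using bij unfolding bij_betw_def by blast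
    have "openin X V" using base V unfolding is_base_of_def by blast
    then have "\<exists>C. clopenin X C \<and> x \<in> C \<and> C \<subseteq> h0 a" using zd V a unfolding zero_dim_def by blast
    from someI_ex[OF this] have "B a \<subseteq> h0 a" using V a unfolding B_def by simp
    then show ?thesis using a V by blast
  qed
  show ?thesis
    by (rule main[OF assms(1) zd Hs noiso F G assms(5), of B]) (use Bc Bbase in auto)
qed

end
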